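(* For all $\alpha,\beta\in K\otimes\mathbb{C}$, $$\langle\alpha,\beta_0\rangle=\mathrm{rk}(\alpha)\deg(\beta)-\mathrm{rk}(\beta)\deg(\alpha)+\mathrm{rk}(\alpha)\mathrm{rk}(\beta)$$ and $$\langle\beta_0,\alpha\rangle=\mathrm{rk}(\beta)\deg(\alpha)-\mathrm{rk}(\alpha)\deg(\beta)+\mathrm{rk}(\alpha)\mathrm{rk}(\beta)\Big(\frac1{n-2}-1\Big).$$
   Context: Fix an integer $n\ge3$; $a_1=n-2$, $a_2=a_3=2$; $X=\mathbb{P}^1_{n-2,2,2}$ is the orbifold projective line with orbifold points of orders $n-2,2,2$. Its $K$-ring is $K=\mathbb{Z}[L_1,L_2,L_3]/\langle L_i^{a_i}-L_j^{a_j},(L_i-1)(L_j-1):i\neq j\rangle$, $L:=L_1^{n-2}$. $\mathrm{rk}:K\to\mathbb{Z}$ is the ring map $L_i\mapsto1$; $\deg:K\to\mathbb{Q}$ is additive with $\deg(1)=0$, $\deg(L_i)=1/a_i$, $\deg(EF)=\mathrm{rk}(E)\deg(F)+\mathrm{rk}(F)\deg(E)$; both extended linearly to $K\otimes\mathbb{C}$. $\langle a,b\rangle=\chi(a^\vee\otimes b)$ is the Euler pairing, extended bilinearly; equivalently $\langle a,b\rangle=\frac1{2\pi}(\Psi(a),e^{\pi\mathbf{i}\theta}e^{\pi\mathbf{i}\rho}\Psi(b))$, where $H$ has basis $\phi_{0,0}=1,\phi_{0,1}=P,\phi_{i,p}$ ($1\le i\le3$, $1\le p\le a_i-1$, twisted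 sectors), pairing $(\phi_{0,0},\phi_{0,1})=1$, $(\phi_{i,p},\phi_{i,a_i-p})=1/a_i$ and zero otherwise, $\theta(\phi_{0,0})=\frac12\phi_{0,0}$, $\theta(\phi_{0,1})=-\frac12\phi_{0,1}$, $\theta(\phi_{i,p})=(\frac12-\frac p{a_i})\phi_{i,p}$, $\rho\phi_{0,0}=\frac1{n-2}\phi_{0,1}$ and $\rho$ kills other basis vectors, and $\Psi(E)=\mathrm{rk}(E)(1-\frac{\gamma}{n-2}P)+2\pi\mathbf{i}\deg(E)P+\sum_{j,p}\Gamma(1-\frac p{a_j})\chi_{j,p}(E)\phi_{j,p}$ with $\gamma=-\Gamma'(1)+(n-2)\log Q$, $Q\in\mathbb{C}^*$, and $\chi_{j,p}$ the ring maps with $\chi_{j,p}(L_i)=e^{-2\pi\mathbf{i}p\delta_{j,i}/a_j}$. $\sigma:K\to K$ is multiplication by the tangent bundle class $T=L_1+L_2+L_3-L-1$. Put $\kappa=2(n-2)$ and for $\beta\in K\otimes\mathbb{C}$, $\beta_0=\frac1\kappa(\beta+\sigma(\beta)+\dots+\sigma^{\kappa-1}(\beta))$. *)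

theory Defs
  imports "HOL-Analysis.Analysis" "HOL-Library.Poly_Mapping" "HOL-Library.Product_Plus"
begin

text \<open>Elements of K tensor C are represented by polynomial representatives in
  C[L1,L2,L3]: finitely supported functions from exponent triples (e1,e2,e3)
  (monomial L1^e1 L2^e2 L3^e3) to coefficients.  All maps below (rk, deg, chi,
  Psi, sigma) are defined on representatives; they vanish on / preserve the
  defining ideal, so they descend to K tensor C.\<close>

type_synonym KC = "(nat \<times> nat \<times> nat) \<Rightarrow>\<^sub>0 complex"

definition orb_order :: "nat \<Rightarrow> nat \<Rightarrow> nat" where
  "orb_order n i = (if i = 1 then n - 2 else 2)"

definition expo :: "nat \<times> nat \<times> nat \<Rightarrow> nat \<Rightarrow> nat" where
  "expo m i = (case m of (e1, e2, e3) \<Rightarrow> if i = 1 then e1 else if i = 2 then e2 else e3)"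

definition Lgen :: "nat \<Rightarrow> KC" where
  "Lgen i = Poly_Mapping.single
     (if i = 1 then (1, 0, 0) else if i = 2 then (0, 1, 0) else (0, 0, 1)) 1"

definition Lbig :: "nat \<Rightarrow> KC" where
  "Lbig n = Lgen 1 ^ (n - 2)"

definition lin_ext :: "((nat \<times> nat \<times> nat) \<Rightarrow> complex) \<Rightarrow> KC \<Rightarrow> complex" where
  "lin_ext f x = (\<Sum>m\<in>Poly_Mapping.keys x. Poly_Mapping.lookup x m * f m)"

definition rk :: "KC \<Rightarrow> complex" where
  "rk x = lin_ext (\<lambda>m. 1) x"

text \<open>deg: additive, deg 1 = 0, deg L_i = 1/a_i, Leibniz rule; on a monomial
  L1^e1 L2^e2 L3^e3 this gives e1/a1 + e2/a2 + e3/a3.\<close>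
definition deg :: "nat \<Rightarrow> KC \<Rightarrow> complex" where
  "deg n x = lin_ext (\<lambda>m. \<Sum>i\<in>{1,2,3}. of_nat (expo m i) / of_nat (orb_order n i)) x"

definition chi :: "nat \<Rightarrow> nat \<Rightarrow> nat \<Rightarrow> KC \<Rightarrow> complex" where
  "chi n j p x = lin_ext (\<lambda>m. \<Prod>i\<in>{1,2,3}.
      exp (- 2 * of_real pi * \<i> * of_nat p * (if j = i then 1 else 0) / of_nat (orb_order n j))
        ^ expo m i) x"

datatype hidx = Phi00 | Phi01 | Tw nat nat

type_synonym HV = "hidx \<Rightarrow> complex"

definition gam :: "nat \<Rightarrow> complex \<Rightarrow> complex" where
  "gam n Q = - deriv Gamma 1 + of_nat (n - 2) * Ln Q"

definition tw_valid :: "nat \<Rightarrow> nat \<Rightarrow> nat \<Rightarrow> bool" where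
  "tw_valid n j p \<longleftrightarrow> j \<in> {1,2,3} \<and> 1 \<le> p \<and> p < orb_order n j"

definition Psi :: "nat \<Rightarrow> complex \<Rightarrow> KC \<Rightarrow> HV" where
  "Psi n Q x = (\<lambda>k. case k of
      Phi00 \<Rightarrow> rk x
    | Phi01 \<Rightarrow> - rk x * gam n Q / of_nat (n - 2) + 2 * of_real pi * \<i> * deg n x
    | Tw j p \<Rightarrow> (if tw_valid n j p
                 then Gamma (1 - of_nat p / of_nat (orb_order n j)) * chi n j p x else 0))"

definition Hpair :: "nat \<Rightarrow> HV \<Rightarrow> HV \<Rightarrow> complex" where
  "Hpair n v w = v Phi00 * w Phi01 + v Phi01 * w Phi00
     + (\<Sum>j\<in>{1,2,3}. \<Sum>p\<in>{1..<orb_order n j}.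
          v (Tw j p) * w (Tw j (orb_order n j - p)) / of_nat (orb_order n j))"

definition theta_ev :: "nat \<Rightarrow> hidx \<Rightarrow> complex" where
  "theta_ev n k = (case k of Phi00 \<Rightarrow> 1/2 | Phi01 \<Rightarrow> - 1/2
                   | Tw j p \<Rightarrow> 1/2 - of_nat p / of_nat (orb_order n j))"

text \<open>e^{pi i theta}: theta is diagonal in the basis.\<close>
definition exp_theta :: "nat \<Rightarrow> HV \<Rightarrow> HV" where
  "exp_theta n v = (\<lambda>k. exp (of_real pi * \<i> * theta_ev n k) * v k)"

definition rho :: "nat \<Rightarrow> HV \<Rightarrow> HV" where
  "rho n v = (\<lambda>k. if k = Phi01 then v Phi00 / of_nat (n - 2) else 0)"

text \<open>e^{pi i rho} = id + pi i rho, since rho^2 = 0.\<close>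
definition exp_rho :: "nat \<Rightarrow> HV \<Rightarrow> HV" where
  "exp_rho n v = (\<lambda>k. v k + of_real pi * \<i> * rho n v k)"

definition euler :: "nat \<Rightarrow> complex \<Rightarrow> KC \<Rightarrow> KC \<Rightarrow> complex" where
  "euler n Q a b = Hpair n (Psi n Q a) (exp_theta n (exp_rho n (Psi n Q b))) / (2 * of_real pi)"

definition Tclass :: "nat \<Rightarrow> KC" where
  "Tclass n = Lgen 1 + Lgen 2 + Lgen 3 - Lbig n - 1"

definition sigma :: "nat \<Rightarrow> KC \<Rightarrow> KC" where
  "sigma n x = Tclass n * x"

definition kappa :: "nat \<Rightarrow> nat" where
  "kappa n = 2 * (n - 2)"

definition beta0 :: "nat \<Rightarrow> KC \<Rightarrow> KC" where
  "beta0 n b = Poly_Mapping.map (\<lambda>c. c / of_nat (kappa n)) (\<Sum>k<kappa n. (sigma n ^^ k) b)"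

end

theory Submission
  imports Defs
begin

lemma lin_ext_super:
  assumes "finite S" "Poly_Mapping.keys x \<subseteq> S"
  shows "lin_ext f x = (\<Sum>m\<in>S. Poly_Mapping.lookup x m * f m)"
  unfolding lin_ext_def
  by (rule sum.mono_neutral_left) (use assms in \<open>auto simp: in_keys_iff\<close>)

lemma lin_ext_add: "lin_ext f (x + y) = lin_ext f x + lin_ext f y"
proof -
  let ?S = "Poly_Mapping.keys x \<union> Poly_Mapping.keys y"
  have k: "Poly_Mapping.keys (x + y) \<subseteq> ?S" by (rule keys_add)
  show ?thesis
    by (subst (1 2 3) lin_ext_super[where S = ?S])
       (use k in \<open>auto simp: lookup_add sum.distrib algebra_simps\<close>)
qed

lemma lin_ext_uminus: "lin_ext f (- x) = - lin_ext f x"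
  unfolding lin_ext_def by (simp add: sum_negf)

lemma lin_ext_diff: "lin_ext f (x - y) = lin_ext f x - lin_ext f y"
  by (metis diff_conv_add_uminus lin_ext_add lin_ext_uminus)

lemma lin_ext_zero: "lin_ext f 0 = 0"
  unfolding lin_ext_def by simp

lemma lin_ext_sum: "lin_ext f (\<Sum>k\<in>A. g k) = (\<Sum>k\<in>A. lin_ext f (g k))"
  by (induction A rule: infinite_finite_induct) (auto simp: lin_ext_zero lin_ext_add)

lemma lin_ext_single: "lin_ext f (Poly_Mapping.single a c) = c * f a"
  by (subst lin_ext_super[where S="{a}"]) auto

lemma lookup_map_div: "Poly_Mapping.lookup (Poly_Mapping.map (\<lambda>c. c / k) x) m = Poly_Mapping.lookup x m / (k::complex)"
  by transfer (auto simp: when_def)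

lemma lin_ext_map: "lin_ext f (Poly_Mapping.map (\<lambda>c. c / k) x) = lin_ext f x / (k::complex)"
proof -
  have "Poly_Mapping.keys (Poly_Mapping.map (\<lambda>c. c / k) x) \<subseteq> Poly_Mapping.keys x"
    by (auto simp: in_keys_iff lookup_map_div)
  then show ?thesis
    by (subst (1 2) lin_ext_super[where S="Poly_Mapping.keys x"])
       (auto simp: lookup_map_div sum_divide_distrib)
qed

lemma decomp: "x = (\<Sum>m\<in>Poly_Mapping.keys x. Poly_Mapping.single m (Poly_Mapping.lookup x m))"
  by (rule poly_mapping_eqI)
     (auto simp: lookup_sum lookup_single when_def in_keys_iff sum.delta)

lemma lin_ext_mult:
  "lin_ext f (x * y) = (\<Sum>a\<in>Poly_Mapping.keys x. \<Sum>b\<in>Poly_Mapping.keys y.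
      Poly_Mapping.lookup x a * Poly_Mapping.lookup y b * f (a + b))"
proof -
  have "x * y = (\<Sum>a\<in>Poly_Mapping.keys x. Poly_Mapping.single a (Poly_Mapping.lookup x a))
     * (\<Sum>b\<in>Poly_Mapping.keys y. Poly_Mapping.single b (Poly_Mapping.lookup y b))"
    using decomp[of x] decomp[of y] by simp
  also have "\<dots> = (\<Sum>a\<in>Poly_Mapping.keys x. \<Sum>b\<in>Poly_Mapping.keys y.
      Poly_Mapping.single (a + b) (Poly_Mapping.lookup x a * Poly_Mapping.lookup y b))"
    by (simp add: sum_product mult_single)
  finally show ?thesis
    by (simp add: lin_ext_sum lin_ext_single)
qed


lemma expo_add: "expo (a + b) i = expo a i + expo b i"
  by (cases a; cases b) (auto simp: expo_def)

lemma rk_mult: "rk (x * y) = rk x * rk y"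
  unfolding rk_def lin_ext_mult by (simp add: lin_ext_def sum_product)

lemma lin_ext_mult_add:
  assumes "\<And>a b. f (a + b) = f a + f b"
  shows "lin_ext f (x * y) = lin_ext (\<lambda>m. 1) x * lin_ext f y + lin_ext f x * lin_ext (\<lambda>m. 1) y"
proof -
  have "lin_ext f (x * y) = (\<Sum>a\<in>Poly_Mapping.keys x. \<Sum>b\<in>Poly_Mapping.keys y.
      Poly_Mapping.lookup x a * (Poly_Mapping.lookup y b * f b)) +
      (\<Sum>a\<in>Poly_Mapping.keys x. \<Sum>b\<in>Poly_Mapping.keys y.
      (Poly_Mapping.lookup x a * f a) * Poly_Mapping.lookup y b)"
    unfolding lin_ext_mult assms by (simp add: algebra_simps sum.distrib)
  then show ?thesis
    by (simp add: lin_ext_def sum_product)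
qed

lemma deg_mult: "deg n (x * y) = rk x * deg n y + deg n x * rk y"
  unfolding rk_def deg_def
  by (rule lin_ext_mult_add) (simp add: expo_add add_divide_distrib sum.distrib)

lemma chi_mult: "chi n j p (x * y) = chi n j p x * chi n j p y"
  unfolding chi_def lin_ext_mult
  by (simp add: lin_ext_def sum_product expo_add power_add prod.distrib algebra_simps)

lemma rk_single: "rk (Poly_Mapping.single a c) = c"
  by (simp add: rk_def lin_ext_single)

lemma deg_single: "deg n (Poly_Mapping.single a c) = c * (\<Sum>i\<in>{1,2,3}. of_nat (expo a i) / of_nat (orb_order n i))"
  by (simp add: deg_def lin_ext_single)

lemma chi_single: "chi n j p (Poly_Mapping.single a c) = c * (\<Prod>i\<in>{1,2,3}.
      exp (- 2 * of_real pi * \<i> * of_nat p * (if j = i then 1 else 0) / of_nat (orb_order n j))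
        ^ expo a i)"
  by (simp add: chi_def lin_ext_single)

lemma zero3: "((0,0,0)::nat\<times>nat\<times>nat) = 0"
  by (simp add: zero_prod_def)

lemma one_single: "(1::KC) = Poly_Mapping.single (0,0,0) 1"
  by (simp add: zero3)

lemma Lgen1_pow: "Lgen 1 ^ k = Poly_Mapping.single (k, 0, 0) 1"
  by (induction k) (auto simp: Lgen_def mult_single one_single)



lemma Lbig_single: "Lbig n = Poly_Mapping.single (n - 2, 0, 0) 1"
  by (simp only: Lbig_def Lgen1_pow)

lemma Tclass_single: "Tclass n = Poly_Mapping.single (1,0,0) 1 + Poly_Mapping.single (0,1,0) 1
   + Poly_Mapping.single (0,0,1) 1 - Poly_Mapping.single (n - 2, 0, 0) 1 - Poly_Mapping.single (0,0,0) 1"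
  by (simp only: Tclass_def Lbig_single one_single) (simp add: Lgen_def)

lemma n_ne_2: assumes "n \<ge> 3" shows "of_nat n \<noteq> (2::complex)"
proof
  assume "of_nat n = (2::complex)"
  hence "of_nat n = (of_nat 2::complex)" by simp
  hence "n = 2" using of_nat_eq_iff by blast
  with assms show False by simp
qed

lemma rk_T: "rk (Tclass n) = 1"
  by (simp add: Tclass_single rk_def lin_ext_add lin_ext_diff lin_ext_single
      )

lemma deg_T: assumes "n \<ge> 3" shows "deg n (Tclass n) = 1 / of_nat (n - 2)"
proof -
  have "of_nat (n - 2) \<noteq> (0::complex)" "of_nat n \<noteq> (2::complex)" using assms n_ne_2 by auto
  then show ?thesis
    by (simp add: Tclass_single deg_def lin_ext_add lin_ext_diff lin_ext_single
       expo_def orb_order_def)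
qed

lemma chi_T:
  assumes "n \<ge> 3" "tw_valid n j p"
  shows "chi n j p (Tclass n) = exp (- 2 * of_real pi * \<i> * of_nat p / of_nat (orb_order n j))"
proof -
  have j: "j \<in> {1,2,3}" "1 \<le> p" "p < orb_order n j" using assms by (auto simp: tw_valid_def)
  show ?thesis
  proof (cases "j = 1")
    case True
    have "exp (- 2 * of_real pi * \<i> * of_nat p / of_nat (n - 2)) ^ (n - 2) = 1"
    proof -
      have "of_nat n \<noteq> (2::complex)" using assms n_ne_2 by auto
      moreover have "\<exists>k::int. - (pi * real p) = pi * real_of_int k"
        by (rule exI[of _ "- int p"]) simp
      ultimately show ?thesis using assms by (simp add: exp_of_nat_mult[symmetric] exp_eq_1)
    qed
    then show ?thesis using True
      by (simp add: Tclass_single chi_def lin_ext_add lin_ext_diff lin_ext_single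
         expo_def orb_order_def)
  next
    case False
    then have "p = 1" "orb_order n j = 2" using j by (auto simp: orb_order_def)
    then show ?thesis using False j
      by (auto simp: Tclass_single chi_def lin_ext_add lin_ext_diff lin_ext_single
         expo_def orb_order_def)
  qed
qed


lemma gauss2: "(\<Sum>k<N. of_nat k :: complex) * 2 = of_nat N * (of_nat N - 1)"
  by (induction N) (auto simp: algebra_simps)

lemma geom0: "(x::complex) \<noteq> 1 \<Longrightarrow> x ^ N = 1 \<Longrightarrow> (\<Sum>k<N. x ^ k) = 0"
  by (simp add: sum_gp_strict)

lemma w_props:
  assumes "n \<ge> 3" "tw_valid n j p"
  defines "w \<equiv> exp (- 2 * of_real pi * \<i> * of_nat p / of_nat (orb_order n j))"
  shows "w \<noteq> 1" "w ^ kappa n = 1"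
proof -
  have j: "j \<in> {1,2,3}" "1 \<le> p" "p < orb_order n j" using assms by (auto simp: tw_valid_def)
  define a where "a = orb_order n j"
  have a0: "a > 0" using j a_def by simp
  show "w \<noteq> 1"
  proof
    assume "w = 1"
    then obtain k :: int where k: "- (2 * pi * real p / real a) = 2 * real_of_int k * pi"
      unfolding w_def a_def[symmetric] exp_eq_1 by auto
    hence "(2*pi) * (- (real p / real a)) = (2*pi) * real_of_int k"
      by (simp add: algebra_simps)
    hence "- (real p / real a) = real_of_int k" using pi_gt_zero
      by (metis mult_cancel_left mult_eq_0_iff pi_neq_zero zero_neq_numeral)
    moreover have "0 < real p / real a" "real p / real a < 1" using j a0 a_def by auto
    ultimately have "-1 < real_of_int k" "real_of_int k < 0" by linarith+
    hence "-1 < k" "k < 0" by linarith+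
    then show False by linarith
  qed
  have wa: "w ^ a = 1"
  proof -
    have "w ^ a = exp (of_nat a * (- 2 * of_real pi * \<i> * of_nat p / of_nat a))"
      unfolding w_def a_def by (simp only: exp_of_nat_mult)
    also have "\<dots> = exp (- 2 * of_real pi * \<i> * of_nat p)" using a0 by simp
    also have "\<dots> = 1"
      by (simp add: exp_eq_1) (rule exI[of _ "- int p"], simp)
    finally show ?thesis .
  qed
  obtain q where "kappa n = a * q"
    using j a_def by (auto simp: kappa_def orb_order_def split: if_splits)
  then show "w ^ kappa n = 1" by (simp add: power_mult wa)
qed


lemma sigma_iter: "(sigma n ^^ k) b = Tclass n ^ k * b"
  by (induction k) (auto simp: sigma_def mult.assoc)

lemma rk_iter: "rk ((sigma n ^^ k) b) = rk b"
  by (induction k) (auto simp: sigma_def rk_mult rk_T)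

lemma deg_iter: assumes "n \<ge> 3"
  shows "deg n ((sigma n ^^ k) b) = of_nat k / of_nat (n - 2) * rk b + deg n b"
proof (induction k)
  case (Suc k)
  have "(sigma n ^^ Suc k) b = Tclass n * (sigma n ^^ k) b" by (simp add: sigma_def)
  then show ?case using Suc rk_iter
    by (simp add: deg_mult rk_T deg_T[OF assms] algebra_simps add_divide_distrib)
qed simp

lemma chi_iter:
  "chi n j p ((sigma n ^^ k) b) = chi n j p (Tclass n) ^ k * chi n j p b"
  by (induction k) (auto simp: sigma_def chi_mult)

lemma rk_map: "rk (Poly_Mapping.map (\<lambda>c. c / k) x) = rk x / k"
  by (simp add: rk_def lin_ext_map)
lemma deg_map: "deg n (Poly_Mapping.map (\<lambda>c. c / k) x) = deg n x / k"
  by (simp add: deg_def lin_ext_map)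
lemma chi_map: "chi n j p (Poly_Mapping.map (\<lambda>c. c / k) x) = chi n j p x / k"
  by (simp add: chi_def lin_ext_map)
lemma rk_sum: "rk (\<Sum>k\<in>A. g k) = (\<Sum>k\<in>A. rk (g k))"
  by (simp add: rk_def lin_ext_sum)
lemma deg_sum: "deg n (\<Sum>k\<in>A. g k) = (\<Sum>k\<in>A. deg n (g k))"
  by (simp add: deg_def lin_ext_sum)
lemma chi_sum: "chi n j p (\<Sum>k\<in>A. g k) = (\<Sum>k\<in>A. chi n j p (g k))"
  by (simp add: chi_def lin_ext_sum)

lemma kappa_pos: "n \<ge> 3 \<Longrightarrow> kappa n > 0"
  by (simp add: kappa_def)

lemma rk_beta0: assumes "n \<ge> 3" shows "rk (beta0 n b) = rk b"
  using kappa_pos[OF assms]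
  by (simp add: beta0_def rk_map rk_sum rk_iter)

lemma chi_beta0: assumes "n \<ge> 3" "tw_valid n j p" shows "chi n j p (beta0 n b) = 0"
proof -
  have "chi n j p (beta0 n b) = (\<Sum>k<kappa n. chi n j p (Tclass n) ^ k) * chi n j p b / of_nat (kappa n)"
    unfolding beta0_def
    by (simp add: chi_map chi_sum chi_iter sum_distrib_right)
  also have "\<dots> = 0"
    using w_props[OF assms] chi_T[OF assms] geom0 by simp
  finally show ?thesis .
qed

lemma deg_beta0: assumes "n \<ge> 3"
  shows "deg n (beta0 n b) = deg n b + rk b * (of_nat (kappa n) - 1) / (2 * of_nat (n - 2))"
proof -
  have k0: "of_nat (kappa n) \<noteq> (0::complex)" "of_nat (n - 2) \<noteq> (0::complex)" using assms n_ne_2 by (auto simp: kappa_def)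
  have "deg n (beta0 n b) = (\<Sum>k<kappa n. of_nat k / of_nat (n - 2) * rk b + deg n b) / of_nat (kappa n)"
    unfolding beta0_def
    by (simp add: deg_map deg_sum deg_iter[OF assms])
  also have "\<dots> = ((\<Sum>k<kappa n. of_nat k) / of_nat (n - 2) * rk b + of_nat (kappa n) * deg n b) / of_nat (kappa n)"
    by (simp add: sum.distrib sum_distrib_right sum_divide_distrib)
  also have "\<dots> = deg n b + rk b * (of_nat (kappa n) - 1) / (2 * of_nat (n - 2))"
  proof -
    have S: "(\<Sum>k<kappa n. of_nat k :: complex) = of_nat (kappa n) * (of_nat (kappa n) - 1) / 2"
      using gauss2[of "kappa n"] by (simp add: field_simps)
    show ?thesis unfolding S using k0 by (simp add: field_simps)
  qed
  finally show ?thesis .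
qed


lemma exp_half: "exp (complex_of_real pi * \<i> * (1/2)) = \<i>"
proof -
  have "complex_of_real pi * \<i> * (1/2) = \<i> * complex_of_real (pi/2)" by simp
  then show ?thesis by (simp only: cis_conv_exp[symmetric] cis_pi_half)
qed

lemma exp_mhalf: "exp (complex_of_real pi * \<i> * (- 1/2)) = - \<i>"
proof -
  have "complex_of_real pi * \<i> * (- 1/2) = - (complex_of_real pi * \<i> * (1/2))" by simp
  then show ?thesis by (simp only: exp_minus exp_half) simp
qed

lemma alg0:
  fixes m p ra rb da db g :: complex
  assumes "m \<noteq> 0" "p \<noteq> 0"
  shows "(ra * (- \<i> * ((- rb * g / m + 2 * p * \<i> * db) + p * \<i> * (rb / m)))
     + (- ra * g / m + 2 * p * \<i> * da) * (\<i> * (rb + p * \<i> * 0))) / (2 * p)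
   = ra * db - rb * da + ra * rb / (2 * m)"
proof -
  have "(ra * (- \<i> * ((- rb * g / m + 2 * p * \<i> * db) + p * \<i> * (rb / m)))
     + (- ra * g / m + 2 * p * \<i> * da) * (\<i> * (rb + p * \<i> * 0)))
     = 2 * p * (ra * db - rb * da + ra * rb / (2 * m))"
    using assms by (simp add: field_simps)
  then show ?thesis using assms by simp
qed

lemma euler_formula:
  assumes "n \<ge> 3" "(\<forall>j p. Psi n Q a (Tw j p) = 0) \<or> (\<forall>j p. Psi n Q b (Tw j p) = 0)"
  shows "euler n Q a b = rk a * deg n b - rk b * deg n a + rk a * rk b / (2 * of_nat (n - 2))"
proof -
  have m0: "of_nat (n - 2) \<noteq> (0::complex)" using assms n_ne_2[OF assms(1)] by simp
  have tw: "(\<Sum>j\<in>{1,2,3}. \<Sum>p\<in>{1..<orb_order n j}.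
          Psi n Q a (Tw j p) * exp_theta n (exp_rho n (Psi n Q b)) (Tw j (orb_order n j - p))
           / of_nat (orb_order n j)) = 0"
    using assms(2) by (auto simp: exp_theta_def exp_rho_def rho_def)
  have "euler n Q a b = (Psi n Q a Phi00 * exp_theta n (exp_rho n (Psi n Q b)) Phi01
      + Psi n Q a Phi01 * exp_theta n (exp_rho n (Psi n Q b)) Phi00) / (2 * of_real pi)"
    unfolding euler_def Hpair_def tw by simp
  also have "\<dots> = rk a * deg n b - rk b * deg n a + rk a * rk b / (2 * of_nat (n - 2))"
  proof -
    have t0: "exp_theta n v Phi00 = \<i> * v Phi00" for v
      by (simp only: exp_theta_def theta_ev_def hidx.case exp_half)
    have t1: "exp_theta n v Phi01 = - \<i> * v Phi01" for v
      by (simp only: exp_theta_def theta_ev_def hidx.case exp_mhalf)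
    have m1: "of_nat n - 2 \<noteq> (0::complex)" using n_ne_2[OF assms(1)] by simp
    have m2: "of_nat n * 2 - 4 \<noteq> (0::complex)" proof -
      have "of_nat n * 2 - 4 = 2 * (of_nat n - 2 :: complex)" by simp
      then show ?thesis using m1 by simp
    qed
    have A: "(rk a * (- \<i> * ((- rk b * gam n Q / of_nat (n - 2) + 2 * complex_of_real pi * \<i> * deg n b)
          + complex_of_real pi * \<i> * (rk b / of_nat (n - 2))))
        + (- rk a * gam n Q / of_nat (n - 2) + 2 * complex_of_real pi * \<i> * deg n a)
          * (\<i> * (rk b + complex_of_real pi * \<i> * 0))) / (2 * complex_of_real pi)
       = rk a * deg n b - rk b * deg n a + rk a * rk b / (2 * of_nat (n - 2))"
      by (rule alg0[OF m0]) simp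
    show ?thesis unfolding t0 t1 A[symmetric]
      by (simp only: exp_rho_def rho_def Psi_def hidx.case hidx.distinct if_True if_False simp_thms)
  qed
  finally show ?thesis .
qed

lemma Psi_beta0_tw: assumes "n \<ge> 3" shows "Psi n Q (beta0 n b) (Tw j p) = 0"
  using chi_beta0[OF assms] by (simp add: Psi_def)

lemma alg1: "(m::complex) \<noteq> 0 \<Longrightarrow>
  x * (d + r * (2 * m - 1) / (2 * m)) - r * y + x * r / (2 * m) = x * d - r * y + x * r"
  by (simp add: field_simps)

lemma alg2: "(m::complex) \<noteq> 0 \<Longrightarrow>
  r * y - x * (d + r * (2 * m - 1) / (2 * m)) + r * x / (2 * m) = r * y - x * d + x * r * (1 / m - 1)"
  by (simp add: field_simps)

theorem lemma7:
  fixes n :: nat and Q :: complex and \<alpha> \<beta> :: KC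
  assumes "n \<ge> 3" and "Q \<noteq> 0"
  shows "euler n Q \<alpha> (beta0 n \<beta>) = rk \<alpha> * deg n \<beta> - rk \<beta> * deg n \<alpha> + rk \<alpha> * rk \<beta>
       \<and> euler n Q (beta0 n \<beta>) \<alpha> = rk \<beta> * deg n \<alpha> - rk \<alpha> * deg n \<beta>
           + rk \<alpha> * rk \<beta> * (1 / of_nat (n - 2) - 1)"
proof -
  have m0: "of_nat (n - 2) \<noteq> (0::complex)" using assms n_ne_2[OF assms(1)] by simp
  have k: "of_nat (kappa n) = 2 * (of_nat (n - 2) :: complex)" by (simp add: kappa_def)
  have P: "\<forall>j p. Psi n Q (beta0 n \<beta>) (Tw j p) = 0" using Psi_beta0_tw[OF assms(1)] by blast
  have e1: "euler n Q \<alpha> (beta0 n \<beta>) = rk \<alpha> * (deg n \<beta> + rk \<beta> * (2 * of_nat (n - 2) - 1) / (2 * of_nat (n - 2)))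
      - rk \<beta> * deg n \<alpha> + rk \<alpha> * rk \<beta> / (2 * of_nat (n - 2))"
    using euler_formula[OF assms(1), of Q \<alpha> "beta0 n \<beta>"] P
    by (simp only: rk_beta0[OF assms(1)] deg_beta0[OF assms(1)] k simp_thms)
  have e2: "euler n Q (beta0 n \<beta>) \<alpha> = rk \<beta> * deg n \<alpha> - rk \<alpha> * (deg n \<beta> + rk \<beta> * (2 * of_nat (n - 2) - 1) / (2 * of_nat (n - 2)))
      + rk \<beta> * rk \<alpha> / (2 * of_nat (n - 2))"
    using euler_formula[OF assms(1), of Q "beta0 n \<beta>" \<alpha>] P
    by (simp only: rk_beta0[OF assms(1)] deg_beta0[OF assms(1)] k simp_thms)
  show ?thesis unfolding e1 e2 alg1[OF m0] alg2[OF m0] by simp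
qed

end
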